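(* Let $d\ge 1$ and $1\le p<q<\infty$. Then the Morrey space $\mathcal{M}^p_q(\mathbb{R}^d)$ satisfies $$C_{\rm NJ}(\mathcal{M}^p_q)=C_{\rm J}(\mathcal{M}^p_q)=2\quad\text{and}\quad C_{\rm DW}(\mathcal{M}^p_q)=4.$$
   Context: For $1\le p\le q<\infty$, the Morrey space $\mathcal{M}^p_q=\mathcal{M}^p_q(\mathbb{R}^d)$ is the Banach space of all measurable functions $f$ on $\mathbb{R}^d$ with $$\|f\|_{\mathcal{M}^p_q}:=\sup_{B=B(a,r)}|B|^{\frac1q-\frac1p}\Big(\int_B|f(y)|^p\,dy\Big)^{1/p}<\infty,$$ the supremum taken over all Euclidean balls $B(a,r)$ with center $a\in\mathbb{R}^d$ and radius $r>0$, and $|B|$ the Lebesgue measure of $B$ (functions equal a.e. identified). For a Banach space $X$: the von Neumann–Jordan constant is $C_{\rm NJ}(X):=\sup\Big\{\frac{\|x+y\|_X^2+\|x-y\|_X^2}{2(\|x\|_X^2+\|y\|_X^2)}: x,y\in X\setminus\{0\}\Big\}$; the James constant is $C_{\rm J}(X):=\sup\{\min\{\|x+y\|_X,\|x-y\|_X\}: x,y\in X,\ \|x\|_X=\|y\|_X=1\}$; the Dunkl–Williams constant is $C_{\rm DW}(X):=\sup\Big\{\frac{\|x\|_X+\|y\|_X}{\|x-y\|_X}\Big\|\frac{x}{\|x\|_X}-\frac{y}{\|y\|_X}\Big\|_X: x,y\in X,\ x\neq0,\ y\neq0,\ x\neq y\Big\}$. *)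

theory Defs
  imports "HOL-Analysis.Analysis"
begin

text \<open>Morrey space on a Euclidean space 'a (of dimension d = DIM('a) \<ge> 1),
  real-valued functions, Lebesgue measure.\<close>

definition morrey_local_int :: "real \<Rightarrow> ('a::euclidean_space \<Rightarrow> real) \<Rightarrow> 'a \<Rightarrow> real \<Rightarrow> ennreal" where
  "morrey_local_int p f a r = (\<integral>\<^sup>+ y\<in>ball a r. ennreal (\<bar>f y\<bar> powr p) \<partial>lebesgue)"

definition morrey_local :: "real \<Rightarrow> real \<Rightarrow> ('a::euclidean_space \<Rightarrow> real) \<Rightarrow> 'a \<Rightarrow> real \<Rightarrow> real" where
  "morrey_local p q f a r =
     measure lebesgue (ball a r) powr (1/q - 1/p) * enn2real (morrey_local_int p f a r) powr (1/p)"

definition in_morrey :: "real \<Rightarrow> real \<Rightarrow> ('a::euclidean_space \<Rightarrow> real) \<Rightarrow> bool" where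
  "in_morrey p q f \<longleftrightarrow> f \<in> borel_measurable lebesgue
     \<and> (\<forall>a r. r > 0 \<longrightarrow> morrey_local_int p f a r < \<infinity>)
     \<and> bdd_above {morrey_local p q f a r | a r. r > 0}"

definition morrey_norm :: "real \<Rightarrow> real \<Rightarrow> ('a::euclidean_space \<Rightarrow> real) \<Rightarrow> real" where
  "morrey_norm p q f = Sup {morrey_local p q f a r | a r. r > 0}"

text \<open>Geometric constants of the Banach space (Morrey space). The zero element of the
  space (class of a.e.-zero functions) is exactly the functions with norm 0.\<close>

definition morrey_C_NJ :: "real \<Rightarrow> real \<Rightarrow> ('a::euclidean_space \<Rightarrow> real) itself \<Rightarrow> real" where
  "morrey_C_NJ p q _ = Sup {((morrey_norm p q (\<lambda>t. f t + g t))\<^sup>2 + (morrey_norm p q (\<lambda>t. f t - g t))\<^sup>2)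
       / (2 * ((morrey_norm p q f)\<^sup>2 + (morrey_norm p q g)\<^sup>2))
     | f g :: 'a \<Rightarrow> real. in_morrey p q f \<and> in_morrey p q g
         \<and> morrey_norm p q f \<noteq> 0 \<and> morrey_norm p q g \<noteq> 0}"

definition morrey_C_J :: "real \<Rightarrow> real \<Rightarrow> ('a::euclidean_space \<Rightarrow> real) itself \<Rightarrow> real" where
  "morrey_C_J p q _ = Sup {min (morrey_norm p q (\<lambda>t. f t + g t)) (morrey_norm p q (\<lambda>t. f t - g t))
     | f g :: 'a \<Rightarrow> real. in_morrey p q f \<and> in_morrey p q g
         \<and> morrey_norm p q f = 1 \<and> morrey_norm p q g = 1}"

definition morrey_C_DW :: "real \<Rightarrow> real \<Rightarrow> ('a::euclidean_space \<Rightarrow> real) itself \<Rightarrow> real" where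
  "morrey_C_DW p q _ = Sup {(morrey_norm p q f + morrey_norm p q g) / morrey_norm p q (\<lambda>t. f t - g t)
       * morrey_norm p q (\<lambda>t. f t / morrey_norm p q f - g t / morrey_norm p q g)
     | f g :: 'a \<Rightarrow> real. in_morrey p q f \<and> in_morrey p q g
         \<and> morrey_norm p q f \<noteq> 0 \<and> morrey_norm p q g \<noteq> 0
         \<and> morrey_norm p q (\<lambda>t. f t - g t) \<noteq> 0}"

end

theory Submission
  imports Defs
begin

lemma mink_scalar:
  fixes x y a b p :: real
  assumes "x \<ge> 0" "y \<ge> 0" "a > 0" "b > 0" "p \<ge> 1"
  shows "(x + y) powr p \<le> (a + b) powr (p - 1) * (a powr (1 - p) * x powr p + b powr (1 - p) * y powr p)"
proof -
  have ab: "a + b > 0" using assms by simp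
  have key: "(a+b) powr (p-1) * (a powr (1-p) * x powr p + b powr (1-p) * y powr p)
      = (a+b) powr p * ((a/(a+b)) * (x/a) powr p + (b/(a+b)) * (y/b) powr p)"
  proof -
    have e1: "(a+b) powr p = (a+b) powr (p-1) * (a+b)" using ab by (simp add: powr_diff)
    have e2: "(x/a) powr p = x powr p / a powr p" using assms by (simp add: powr_divide)
    have e3: "(y/b) powr p = y powr p / b powr p" using assms by (simp add: powr_divide)
    have e4: "a powr (1-p) = a / a powr p" using assms by (simp add: powr_diff)
    have e5: "b powr (1-p) = b / b powr p" using assms by (simp add: powr_diff)
    have gen: "\<And>P A B X Y. A > 0 \<Longrightarrow> B > 0 \<Longrightarrow> P * (a / A * X + b / B * Y)
        = P * (a+b) * ((a/(a+b)) * (X / A) + (b/(a+b)) * (Y/B))"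
    proof -
      fix P A B X Y :: real
      have h1: "(a+b)*(a/(a+b)) = a" "(a+b)*(b/(a+b)) = b" using ab by auto
      have "P * (a+b) * ((a/(a+b)) * (X / A) + (b/(a+b)) * (Y/B))
          = P * (((a+b)*(a/(a+b))) * (X / A) + ((a+b)*(b/(a+b))) * (Y/B))"
        using ring_class.ring_distribs(1)[of "P*(a+b)" "(a/(a+b)) * (X / A)" "(b/(a+b)) * (Y/B)"]
              ring_class.ring_distribs(1)[of "P" "((a+b)*(a/(a+b))) * (X / A)" "((a+b)*(b/(a+b))) * (Y/B)"]
        by (simp only: mult.assoc)
      also have "\<dots> = P * (a / A * X + b / B * Y)" unfolding h1 by simp
      finally show "P * (a / A * X + b / B * Y)
        = P * (a+b) * ((a/(a+b)) * (X / A) + (b/(a+b)) * (Y/B))" by (rule sym)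
    qed
    show ?thesis unfolding e1 e2 e3 e4 e5 by (rule gen) (use assms in simp_all)
  qed
  show ?thesis
  proof (cases "x > 0 \<and> y > 0")
    case True
    have c: "convex_on {0<..} (\<lambda>x::real. x powr p)" using powr_convex assms by simp
    have "((a/(a+b)) * (x/a) + (b/(a+b)) * (y/b)) powr p \<le> (a/(a+b)) * (x/a) powr p + (b/(a+b)) * (y/b) powr p"
    proof -
      have t: "1 - b/(a+b) = a/(a+b)" using ab by (simp add: field_simps)
      show ?thesis
        using convex_onD[OF c, of "b/(a+b)" "x/a" "y/b"] True assms ab unfolding t
        by simp
    qed
    moreover have "(a/(a+b)) * (x/a) + (b/(a+b)) * (y/b) = (x+y)/(a+b)"
    proof -
      have "(a/(a+b)) * (x/a) = x/(a+b)" "(b/(a+b)) * (y/b) = y/(a+b)" using assms by auto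
      then show ?thesis by (simp add: add_divide_distrib)
    qed
    ultimately have "((x+y)/(a+b)) powr p \<le> (a/(a+b)) * (x/a) powr p + (b/(a+b)) * (y/b) powr p" by simp
    hence "(a+b) powr p * ((x+y)/(a+b)) powr p \<le> (a+b) powr p * ((a/(a+b)) * (x/a) powr p + (b/(a+b)) * (y/b) powr p)"
      by (simp add: mult_left_mono)
    moreover have "(a+b) powr p * ((x+y)/(a+b)) powr p = (x+y) powr p"
      using ab assms by (simp add: powr_divide)
    ultimately show ?thesis using key by simp
  next
    case False
    then consider "x = 0" | "y = 0" using assms by linarith
    then show ?thesis
    proof cases
      case 1
      have "b powr (p-1) * b powr (1-p) = 1" using assms by (simp flip: powr_add)
      moreover have "b powr (p-1) \<le> (a+b) powr (p-1)" using assms by (intro powr_mono2) auto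
      ultimately have one: "1 \<le> (a+b) powr (p-1) * b powr (1-p)"
        by (metis mult_right_mono powr_ge_zero)
      have "y powr p \<le> (a+b) powr (p-1) * b powr (1-p) * y powr p"
        using mult_right_mono[OF one powr_ge_zero] by simp
      then show ?thesis using 1 assms by (simp add: algebra_simps)
    next
      case 2
      have "a powr (p-1) * a powr (1-p) = 1" using assms by (simp flip: powr_add)
      moreover have "a powr (p-1) \<le> (a+b) powr (p-1)" using assms by (intro powr_mono2) auto
      ultimately have one: "1 \<le> (a+b) powr (p-1) * a powr (1-p)"
        by (metis mult_right_mono powr_ge_zero)
      have "x powr p \<le> (a+b) powr (p-1) * a powr (1-p) * x powr p"
        using mult_right_mono[OF one powr_ge_zero] by simp
      then show ?thesis using 2 assms by (simp add: algebra_simps)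
    qed
  qed
qed

lemma meas_aux[measurable]:
  fixes f :: "'a::euclidean_space \<Rightarrow> real"
  assumes "f \<in> borel_measurable lebesgue"
  shows "(\<lambda>y. ennreal (\<bar>f y\<bar> powr p) * indicator (ball a r) y) \<in> borel_measurable lebesgue"
proof -
  have [measurable]: "ball a r \<in> sets lebesgue" by simp
  show ?thesis using assms by measurable
qed

lemma mink_ball:
  fixes f g :: "'a::euclidean_space \<Rightarrow> real"
  assumes p: "1 \<le> p" and f: "f \<in> borel_measurable lebesgue" and g: "g \<in> borel_measurable lebesgue"
    and fi: "morrey_local_int p f a r < \<infinity>" and gi: "morrey_local_int p g a r < \<infinity>"
  shows "morrey_local_int p (\<lambda>t. f t + g t) a r < \<infinity>
    \<and> enn2real (morrey_local_int p (\<lambda>t. f t + g t) a r) powr (1/p)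
       \<le> enn2real (morrey_local_int p f a r) powr (1/p) + enn2real (morrey_local_int p g a r) powr (1/p)"
proof -
  define J where "J = morrey_local_int p (\<lambda>t. f t + g t) a r"
  define If where "If = morrey_local_int p f a r"
  define Ig where "Ig = morrey_local_int p g a r"
  define A where "A = enn2real If powr (1/p)"
  define B where "B = enn2real Ig powr (1/p)"
  have A0: "A \<ge> 0" "B \<ge> 0" unfolding A_def B_def by auto
  have Ifr: "If = ennreal (A powr p)"
  proof -
    have "A powr p = enn2real If" unfolding A_def using p by (simp add: powr_powr)
    thus ?thesis using fi unfolding If_def by (simp add: ennreal_enn2real_if)
  qed
  have Igr: "Ig = ennreal (B powr p)"
  proof -
    have "B powr p = enn2real Ig" unfolding B_def using p by (simp add: powr_powr)
    thus ?thesis using gi unfolding Ig_def by (simp add: ennreal_enn2real_if)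
  qed
  have step: "J \<le> ennreal ((A + B + 2*\<delta>) powr p)" if d: "\<delta> > 0" for \<delta>
  proof -
    define A' where "A' = A + \<delta>"
    define B' where "B' = B + \<delta>"
    have A'0: "A' > 0" "B' > 0" using A0 d unfolding A'_def B'_def by auto
    define C1 where "C1 = (A'+B') powr (p-1) * A' powr (1-p)"
    define C2 where "C2 = (A'+B') powr (p-1) * B' powr (1-p)"
    have C0: "C1 \<ge> 0" "C2 \<ge> 0" unfolding C1_def C2_def by auto
    have pw: "ennreal (\<bar>f y + g y\<bar> powr p) * indicator (ball a r) y
        \<le> ennreal C1 * (ennreal (\<bar>f y\<bar> powr p) * indicator (ball a r) y)
          + ennreal C2 * (ennreal (\<bar>g y\<bar> powr p) * indicator (ball a r) y)" for y
    proof -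
      have "\<bar>f y + g y\<bar> powr p \<le> (\<bar>f y\<bar> + \<bar>g y\<bar>) powr p"
        using p by (intro powr_mono2) auto
      also have "\<dots> \<le> C1 * \<bar>f y\<bar> powr p + C2 * \<bar>g y\<bar> powr p"
        using mink_scalar[of "\<bar>f y\<bar>" "\<bar>g y\<bar>" A' B' p] A'0 p unfolding C1_def C2_def
        by (simp add: algebra_simps)
      finally have "ennreal (\<bar>f y + g y\<bar> powr p) \<le> ennreal C1 * ennreal (\<bar>f y\<bar> powr p) + ennreal C2 * ennreal (\<bar>g y\<bar> powr p)"
        using C0 by (simp add: ennreal_plus[symmetric] ennreal_mult[symmetric] del: ennreal_plus)
      then show ?thesis by (cases "y \<in> ball a r") (auto simp: algebra_simps)
    qed
    have "J \<le> (\<integral>\<^sup>+ y. ennreal C1 * (ennreal (\<bar>f y\<bar> powr p) * indicator (ball a r) y)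
          + ennreal C2 * (ennreal (\<bar>g y\<bar> powr p) * indicator (ball a r) y) \<partial>lebesgue)"
      unfolding J_def morrey_local_int_def by (intro nn_integral_mono pw)
    also have "\<dots> = ennreal C1 * If + ennreal C2 * Ig"
      unfolding If_def Ig_def morrey_local_int_def using f g
      by (simp add: nn_integral_add nn_integral_cmult)
    also have "\<dots> = ennreal (C1 * A powr p + C2 * B powr p)"
      unfolding Ifr Igr using C0 by (simp add: ennreal_plus[symmetric] ennreal_mult[symmetric] del: ennreal_plus)
    also have "\<dots> \<le> ennreal ((A + B + 2*\<delta>) powr p)"
    proof (rule ennreal_leI)
      have "A' powr (1-p) * A powr p \<le> A' powr (1-p) * A' powr p"
        using A0 p unfolding A'_def using d by (intro mult_left_mono powr_mono2) auto
      also have "\<dots> = A'" using A'0 by (simp flip: powr_add)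
      finally have 1: "A' powr (1-p) * A powr p \<le> A'" .
      have "B' powr (1-p) * B powr p \<le> B' powr (1-p) * B' powr p"
        using A0 p unfolding B'_def using d by (intro mult_left_mono powr_mono2) auto
      also have "\<dots> = B'" using A'0 by (simp flip: powr_add)
      finally have 2: "B' powr (1-p) * B powr p \<le> B'" .
      have "C1 * A powr p + C2 * B powr p
          = (A'+B') powr (p-1) * (A' powr (1-p) * A powr p + B' powr (1-p) * B powr p)"
        unfolding C1_def C2_def by (simp add: algebra_simps)
      also have "\<dots> \<le> (A'+B') powr (p-1) * (A' + B')"
        using 1 2 by (intro mult_left_mono) auto
      also have "\<dots> = (A'+B') powr p" using A'0 by (simp add: powr_diff)
      also have "A' + B' = A + B + 2*\<delta>" unfolding A'_def B'_def by simp
      finally show "C1 * A powr p + C2 * B powr p \<le> (A + B + 2*\<delta>) powr p" .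
    qed
    finally show ?thesis .
  qed
  have Jfin: "J < \<infinity>" using step[of 1] by (simp add: le_less_trans)
  have "enn2real J powr (1/p) \<le> A + B"
  proof (rule field_le_epsilon)
    fix e :: real assume e: "e > 0"
    have "enn2real J \<le> (A + B + 2*(e/2)) powr p"
      using step[of "e/2"] e A0 by (simp add: enn2real_leI)
    hence "enn2real J powr (1/p) \<le> ((A + B + 2*(e/2)) powr p) powr (1/p)"
      using p by (intro powr_mono2) auto
    also have "\<dots> = A + B + e" using p A0 e by (simp add: powr_powr)
    finally show "enn2real J powr (1/p) \<le> A + B + e" .
  qed
  then show ?thesis using Jfin unfolding J_def A_def B_def If_def Ig_def by simp
qed

lemma ball_measure:
  "0 \<le> r \<Longrightarrow> measure lebesgue (ball (c::'a::euclidean_space) r) = unit_ball_vol DIM('a) * r ^ DIM('a)"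
  by (simp add: measure_completion content_ball)

lemma ball_content:
  "0 \<le> r \<Longrightarrow> Henstock_Kurzweil_Integration.content (ball (c::'a::euclidean_space) r) = unit_ball_vol DIM('a) * r ^ DIM('a)"
  by (simp add: content_ball)

lemma ball_measure_pos:
  "0 < r \<Longrightarrow> measure lebesgue (ball (c::'a::euclidean_space) r) > 0"
  by (simp add: ball_measure ball_content)

lemma local_nonneg: "morrey_local p q f a r \<ge> 0"
  unfolding morrey_local_def by (intro mult_nonneg_nonneg powr_ge_zero)

lemma local_in_set: "r > 0 \<Longrightarrow> morrey_local p q f a r \<in> {morrey_local p q f a r | a r. r > 0}"
  by auto

lemma set_ne: "{morrey_local p q f a r | a r. r > 0} \<noteq> {}"
  using local_in_set[of 1 p q f 0] by (metis empty_iff zero_less_one)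

lemma local_le_norm:
  assumes "in_morrey p q f" "r > 0"
  shows "morrey_local p q f a r \<le> morrey_norm p q f"
  unfolding morrey_norm_def using assms unfolding in_morrey_def
  by (intro cSup_upper) auto

lemma norm_nonneg:
  assumes "in_morrey p q f"
  shows "morrey_norm p q f \<ge> 0"
  using local_le_norm[OF assms, of 1 0] local_nonneg[of p q f 0 1] by simp

lemma norm_le:
  assumes "\<And>a r. r > 0 \<Longrightarrow> morrey_local p q f a r \<le> z"
  shows "morrey_norm p q f \<le> z"
  unfolding morrey_norm_def by (intro cSup_least[OF set_ne]) (use assms in auto)

lemma local_add:
  fixes f g :: "'a::euclidean_space \<Rightarrow> real"
  assumes p: "1 \<le> p" and f: "f \<in> borel_measurable lebesgue" and g: "g \<in> borel_measurable lebesgue"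
    and fi: "morrey_local_int p f a r < \<infinity>" and gi: "morrey_local_int p g a r < \<infinity>"
  shows "morrey_local_int p (\<lambda>t. f t + g t) a r < \<infinity>
    \<and> morrey_local p q (\<lambda>t. f t + g t) a r \<le> morrey_local p q f a r + morrey_local p q g a r"
proof -
  have m: "measure lebesgue (ball a r) powr (1/q - 1/p) \<ge> 0" by simp
  show ?thesis
    using mink_ball[OF assms] mult_left_mono[OF _ m] unfolding morrey_local_def distrib_left[symmetric]
    by blast
qed

lemma in_morrey_add:
  fixes f g :: "'a::euclidean_space \<Rightarrow> real"
  assumes p: "1 \<le> p" and f: "in_morrey p q f" and g: "in_morrey p q g"
  shows "in_morrey p q (\<lambda>t. f t + g t) \<and> morrey_norm p q (\<lambda>t. f t + g t) \<le> morrey_norm p q f + morrey_norm p q g"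
proof -
  have fm: "f \<in> borel_measurable lebesgue" and gm: "g \<in> borel_measurable lebesgue"
    using f g unfolding in_morrey_def by auto
  have la: "morrey_local_int p (\<lambda>t. f t + g t) a r < \<infinity>
    \<and> morrey_local p q (\<lambda>t. f t + g t) a r \<le> morrey_norm p q f + morrey_norm p q g" if "r > 0" for a r
    using local_add[OF p fm gm, of a r q] f g that local_le_norm[OF f that, of a] local_le_norm[OF g that, of a]
    unfolding in_morrey_def by auto
  have "in_morrey p q (\<lambda>t. f t + g t)"
    unfolding in_morrey_def using fm gm la by (auto intro!: bdd_aboveI)
  moreover have "morrey_norm p q (\<lambda>t. f t + g t) \<le> morrey_norm p q f + morrey_norm p q g"
    using la by (intro norm_le) auto
  ultimately show ?thesis by blast
qed

lemma local_int_scale: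
  fixes f :: "'a::euclidean_space \<Rightarrow> real"
  assumes p: "1 \<le> p" and f: "f \<in> borel_measurable lebesgue"
  shows "morrey_local_int p (\<lambda>t. c * f t) a r = ennreal (\<bar>c\<bar> powr p) * morrey_local_int p f a r"
proof -
  have "morrey_local_int p (\<lambda>t. c * f t) a r
      = (\<integral>\<^sup>+ y. ennreal (\<bar>c\<bar> powr p) * (ennreal (\<bar>f y\<bar> powr p) * indicator (ball a r) y) \<partial>lebesgue)"
    unfolding morrey_local_int_def
    by (intro nn_integral_cong) (simp add: abs_mult powr_mult ennreal_mult mult.assoc)
  also have "\<dots> = ennreal (\<bar>c\<bar> powr p) * morrey_local_int p f a r"
    unfolding morrey_local_int_def using f by (simp add: nn_integral_cmult)
  finally show ?thesis .
qed

lemma local_scale: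
  fixes f :: "'a::euclidean_space \<Rightarrow> real"
  assumes p: "1 \<le> p" and f: "f \<in> borel_measurable lebesgue"
  shows "morrey_local p q (\<lambda>t. c * f t) a r = \<bar>c\<bar> * morrey_local p q f a r"
proof -
  have "enn2real (morrey_local_int p (\<lambda>t. c * f t) a r) powr (1/p)
     = \<bar>c\<bar> * enn2real (morrey_local_int p f a r) powr (1/p)"
    unfolding local_int_scale[OF p f] using p
    by (simp add: enn2real_mult powr_mult powr_powr)
  then show ?thesis unfolding morrey_local_def by simp
qed

lemma in_morrey_scale1:
  fixes f :: "'a::euclidean_space \<Rightarrow> real"
  assumes p: "1 \<le> p" and f: "in_morrey p q f"
  shows "in_morrey p q (\<lambda>t. c * f t) \<and> morrey_norm p q (\<lambda>t. c * f t) \<le> \<bar>c\<bar> * morrey_norm p q f"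
proof -
  have fm: "f \<in> borel_measurable lebesgue" using f unfolding in_morrey_def by auto
  have le: "morrey_local p q (\<lambda>t. c * f t) a r \<le> \<bar>c\<bar> * morrey_norm p q f" if "r > 0" for a r
    unfolding local_scale[OF p fm] using local_le_norm[OF f that] by (simp add: mult_left_mono)
  have "in_morrey p q (\<lambda>t. c * f t)"
    unfolding in_morrey_def using f le
    by (auto intro!: bdd_aboveI simp: in_morrey_def local_int_scale[OF p fm] ennreal_mult_less_top)
  then show ?thesis using le norm_le by blast
qed

lemma in_morrey_scale:
  fixes f :: "'a::euclidean_space \<Rightarrow> real"
  assumes p: "1 \<le> p" and f: "in_morrey p q f"
  shows "in_morrey p q (\<lambda>t. c * f t) \<and> morrey_norm p q (\<lambda>t. c * f t) = \<bar>c\<bar> * morrey_norm p q f"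
proof (cases "c = 0")
  case True
  have "morrey_norm p q (\<lambda>t. 0 * f t) \<le> 0"
    by (intro norm_le) (simp add: morrey_local_def morrey_local_int_def)
  moreover have "morrey_norm p q (\<lambda>t. 0 * f t) \<ge> 0"
    using in_morrey_scale1[OF p f, of 0] norm_nonneg by blast
  ultimately show ?thesis using True in_morrey_scale1[OF p f, of 0] by simp
next
  case False
  have A: "in_morrey p q (\<lambda>t. c * f t)" "morrey_norm p q (\<lambda>t. c * f t) \<le> \<bar>c\<bar> * morrey_norm p q f"
    using in_morrey_scale1[OF p f] by auto
  have "morrey_norm p q (\<lambda>t. (1/c) * (c * f t)) \<le> \<bar>1/c\<bar> * morrey_norm p q (\<lambda>t. c * f t)"
    using in_morrey_scale1[OF p A(1)] by blast
  moreover have "(\<lambda>t. (1/c) * (c * f t)) = f" using False by auto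
  ultimately have "morrey_norm p q f \<le> \<bar>1/c\<bar> * morrey_norm p q (\<lambda>t. c * f t)" by simp
  hence "\<bar>c\<bar> * morrey_norm p q f \<le> morrey_norm p q (\<lambda>t. c * f t)"
    using False by (simp add: field_simps)
  then show ?thesis using A by simp
qed

lemma lin_morrey:
  fixes u v :: "'a::euclidean_space \<Rightarrow> real"
  assumes p: "1 \<le> p" and u: "in_morrey p q u" and v: "in_morrey p q v"
  shows "in_morrey p q (\<lambda>t. c1 * u t + c2 * v t)
    \<and> morrey_norm p q (\<lambda>t. c1 * u t + c2 * v t) \<le> \<bar>c1\<bar> * morrey_norm p q u + \<bar>c2\<bar> * morrey_norm p q v"
  using in_morrey_add[OF p in_morrey_scale[OF p u, of c1, THEN conjunct1] in_morrey_scale[OF p v, of c2, THEN conjunct1]]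
    in_morrey_scale[OF p u, of c1] in_morrey_scale[OF p v, of c2]
  by simp

lemma diff_morrey:
  fixes u v :: "'a::euclidean_space \<Rightarrow> real"
  assumes p: "1 \<le> p" and u: "in_morrey p q u" and v: "in_morrey p q v"
  shows "in_morrey p q (\<lambda>t. u t - v t)
    \<and> morrey_norm p q (\<lambda>t. u t - v t) \<le> morrey_norm p q u + morrey_norm p q v"
proof -
  have "(\<lambda>t. u t - v t) = (\<lambda>t. 1 * u t + (-1) * v t)" by auto
  then show ?thesis using lin_morrey[OF p u v, of 1 "-1"] by simp
qed

lemma sum_morrey:
  fixes u v :: "'a::euclidean_space \<Rightarrow> real"
  assumes p: "1 \<le> p" and u: "in_morrey p q u" and v: "in_morrey p q v"
  shows "morrey_norm p q (\<lambda>t. u t + v t) \<le> morrey_norm p q u + morrey_norm p q v"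
  using in_morrey_add[OF p u v] by simp

lemma dw_bound:
  fixes f g :: "'a::euclidean_space \<Rightarrow> real"
  assumes p: "1 \<le> p" and f: "in_morrey p q f" and g: "in_morrey p q g"
    and a: "morrey_norm p q f \<noteq> 0" and b: "morrey_norm p q g \<noteq> 0"
    and D: "morrey_norm p q (\<lambda>t. f t - g t) \<noteq> 0"
  shows "(morrey_norm p q f + morrey_norm p q g) / morrey_norm p q (\<lambda>t. f t - g t)
       * morrey_norm p q (\<lambda>t. f t / morrey_norm p q f - g t / morrey_norm p q g) \<le> 4"
proof -
  define A where "A = morrey_norm p q f"
  define B where "B = morrey_norm p q g"
  define E where "E = morrey_norm p q (\<lambda>t. f t - g t)"
  define fg where "fg = (\<lambda>t. f t - g t)"
  have fgm: "in_morrey p q fg" unfolding fg_def using diff_morrey[OF p f g] by blast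
  have A0: "A > 0" using a norm_nonneg[OF f] unfolding A_def by linarith
  have B0: "B > 0" using b norm_nonneg[OF g] unfolding B_def by linarith
  have E0: "E > 0" using D norm_nonneg[OF fgm] unfolding E_def fg_def by linarith
  have h: "morrey_norm p q (\<lambda>t. f t / A - g t / B) \<le> 2 * E / max A B"
  proof (cases "B \<le> A")
    case True
    have eq: "(\<lambda>t. f t / A - g t / B) = (\<lambda>t. (1/A) * fg t + (1/A - 1/B) * g t)"
      unfolding fg_def using A0 B0 by (auto simp: field_simps)
    have "morrey_norm p q (\<lambda>t. f t / A - g t / B) \<le> \<bar>1/A\<bar> * E + \<bar>1/A - 1/B\<bar> * B"
      unfolding eq using lin_morrey[OF p fgm g, of "1/A" "1/A - 1/B"] unfolding E_def B_def fg_def by simp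
    also have "\<bar>1/A - 1/B\<bar> = 1/B - 1/A" using True A0 B0 by (simp add: field_simps)
    also have "\<bar>1/A\<bar> = 1/A" using A0 by simp
    finally have 1: "morrey_norm p q (\<lambda>t. f t / A - g t / B) \<le> 1/A * E + (1/B - 1/A) * B" .
    have "(\<lambda>t. fg t + g t) = f" unfolding fg_def by auto
    hence "A \<le> E + B" using sum_morrey[OF p fgm g] unfolding A_def E_def B_def fg_def by simp
    moreover have "1/A * E + (1/B - 1/A) * B = (E + A - B) / A" using A0 B0 by (simp add: field_simps)
    ultimately have "1/A * E + (1/B - 1/A) * B \<le> 2 * E / A" using A0 by (simp add: divide_right_mono)
    then show ?thesis using 1 True by simp
  next
    case False
    have eq: "(\<lambda>t. f t / A - g t / B) = (\<lambda>t. (1/A - 1/B) * f t + (1/B) * fg t)"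
      unfolding fg_def using A0 B0 by (auto simp: field_simps)
    have "morrey_norm p q (\<lambda>t. f t / A - g t / B) \<le> \<bar>1/A - 1/B\<bar> * A + \<bar>1/B\<bar> * E"
      unfolding eq using lin_morrey[OF p f fgm, of "1/A - 1/B" "1/B"] unfolding E_def A_def fg_def by simp
    also have "\<bar>1/A - 1/B\<bar> = 1/A - 1/B" using False A0 B0 by (simp add: field_simps)
    also have "\<bar>1/B\<bar> = 1/B" using B0 by simp
    finally have 1: "morrey_norm p q (\<lambda>t. f t / A - g t / B) \<le> (1/A - 1/B) * A + 1/B * E" .
    have "(\<lambda>t. 1 * f t + (-1) * fg t) = g" unfolding fg_def by auto
    hence "B \<le> A + E" using lin_morrey[OF p f fgm, of 1 "-1"] unfolding A_def E_def B_def fg_def by simp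
    moreover have "(1/A - 1/B) * A + 1/B * E = (B - A + E) / B" using A0 B0 by (simp add: field_simps)
    ultimately have "(1/A - 1/B) * A + 1/B * E \<le> 2 * E / B" using B0 by (simp add: divide_right_mono)
    then show ?thesis using 1 False by simp
  qed
  have "(A + B) / E * morrey_norm p q (\<lambda>t. f t / A - g t / B) \<le> (A + B) / E * (2 * E / max A B)"
    using h A0 B0 E0 by (intro mult_left_mono) auto
  also have "\<dots> = 2 * (A + B) / max A B" using E0 by simp
  also have "\<dots> \<le> 4" using A0 B0 by (simp add: field_simps max_def)
  finally show ?thesis unfolding A_def B_def E_def .
qed

lemma scalK:
  fixes p q m s w :: real
  assumes p: "1 \<le> p" "p < q" and m: "m > 0" and w: "w > 0" and s: "0 \<le> s" "s \<le> m" "s \<le> w"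
  shows "m powr (1/q - 1/p) * s powr (1/p) \<le> w powr (1/q)"
proof -
  have neg: "1/q - 1/p \<le> 0" using p by (simp add: field_simps)
  show ?thesis
  proof (cases "m \<le> w")
    case True
    have "m powr (1/q - 1/p) * s powr (1/p) \<le> m powr (1/q - 1/p) * m powr (1/p)"
      using s p by (intro mult_left_mono powr_mono2) auto
    also have "\<dots> = m powr (1/q)" using m by (simp flip: powr_add)
    also have "\<dots> \<le> w powr (1/q)" using True m p by (intro powr_mono2) auto
    finally show ?thesis .
  next
    case False
    have "m powr (1/q - 1/p) * s powr (1/p) \<le> m powr (1/q - 1/p) * w powr (1/p)"
      using s p by (intro mult_left_mono powr_mono2) auto
    also have "\<dots> \<le> w powr (1/q - 1/p) * w powr (1/p)"
      using False w neg by (intro mult_right_mono powr_mono2') auto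
    also have "\<dots> = w powr (1/q)" using w by (simp flip: powr_add)
    finally show ?thesis .
  qed
qed

definition k0 :: "real \<Rightarrow> real \<Rightarrow> real" where
  "k0 p q = 2 powr ((1/p) / (1/p - 1/q))"

lemma scalK2:
  fixes p q x :: real
  assumes p: "1 \<le> p" "p < q" and x: "x \<ge> k0 p q"
  shows "2 powr (1/p) * x powr (1/q - 1/p) \<le> 1"
proof -
  have neg: "1/q - 1/p \<le> 0" and pos: "1/p - 1/q > 0" using p by (simp_all add: field_simps)
  have k: "k0 p q > 0" unfolding k0_def by simp
  have "x powr (1/q - 1/p) \<le> k0 p q powr (1/q - 1/p)"
    using x k neg by (intro powr_mono2') auto
  also have "\<dots> = 2 powr (- (1/p))"
  proof -
    have "(1/p) / (1/p - 1/q) * (1/q - 1/p) = - ((1/p) / (1/p - 1/q) * (1/p - 1/q))" by (metis minus_diff_eq mult_minus_right)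
    also have "\<dots> = - (1/p)"
    proof -
      have gen: "\<And>x d::real. d \<noteq> 0 \<Longrightarrow> x / d * d = x" by simp
      show ?thesis using gen[of "1/p - 1/q" "1/p"] pos by linarith
    qed
    finally show ?thesis unfolding k0_def by (simp add: powr_powr)
  qed
  finally have "2 powr (1/p) * x powr (1/q - 1/p) \<le> 2 powr (1/p) * 2 powr (- (1/p))"
    by (intro mult_left_mono) auto
  also have "\<dots> = 1" by (simp flip: powr_add)
  finally show ?thesis .
qed

lemma two_ball:
  fixes z :: "'a::euclidean_space" and \<alpha> \<beta> p q :: real
  assumes p: "1 \<le> p" "p < q" and z: "norm z \<ge> 2 * k0 p q + 4"
  defines "h \<equiv> (\<lambda>t. \<alpha> * indicator (ball 0 1) t + \<beta> * indicator (ball z 1) t)"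
  shows "in_morrey p q h \<and> morrey_norm p q h = max \<bar>\<alpha>\<bar> \<bar>\<beta>\<bar> * unit_ball_vol DIM('a) powr (1/q)"
proof -
  define w where "w = unit_ball_vol DIM('a)"
  define M where "M = max \<bar>\<alpha>\<bar> \<bar>\<beta>\<bar>"
  define S1 where "S1 = ball (0::'a) 1"
  define S2 where "S2 = ball z 1"
  have w0: "w > 0" unfolding w_def by simp
  have k: "k0 p q > 0" unfolding k0_def by simp
  have p0: "p > 0" using p by simp
  have disj: "y \<notin> S2" if "y \<in> S1" for y
  proof
    assume "y \<in> S2"
    hence "dist z y < 1" unfolding S2_def by simp
    moreover have "norm y < 1" using that unfolding S1_def by simp
    moreover have "norm z \<le> norm y + dist z y" using norm_triangle_sub[of z y] by (simp add: dist_norm)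
    ultimately show False using z k by linarith
  qed
  have [measurable]: "S1 \<in> sets lebesgue" "S2 \<in> sets lebesgue" "ball a r \<in> sets lebesgue" for a r
    unfolding S1_def S2_def by simp_all
  have hm: "h \<in> borel_measurable lebesgue" unfolding h_def S1_def[symmetric] S2_def[symmetric] by measurable
  have lm: "ball a r \<inter> S \<in> lmeasurable" if "S = S1 \<or> S = S2" for a r S
    using that unfolding S1_def S2_def by (auto intro!: bounded_set_imp_lmeasurable bounded_Int)
  define \<mu> where "\<mu> (a::'a) (r::real) S = measure lebesgue (ball a r \<inter> S)" for a r S
  have int: "morrey_local_int p h a r = ennreal (\<bar>\<alpha>\<bar> powr p * \<mu> a r S1 + \<bar>\<beta>\<bar> powr p * \<mu> a r S2)" for a r
  proof -
    have pt: "ennreal (\<bar>h y\<bar> powr p) * indicator (ball a r) y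
      = ennreal (\<bar>\<alpha>\<bar> powr p) * indicator (ball a r \<inter> S1) y + ennreal (\<bar>\<beta>\<bar> powr p) * indicator (ball a r \<inter> S2) y" for y
    proof -
      consider "y \<in> S1" | "y \<in> S2" | "y \<notin> S1" "y \<notin> S2" by blast
      then show ?thesis
      proof cases
        case 1 then show ?thesis using disj[OF 1] p0 unfolding h_def S1_def[symmetric] S2_def[symmetric]
          by (simp add: indicator_def)
      next
        case 2 then have "y \<notin> S1" using disj by blast
        then show ?thesis using 2 p0 unfolding h_def S1_def[symmetric] S2_def[symmetric]
          by (simp add: indicator_def)
      next
        case 3 then show ?thesis using p0 unfolding h_def S1_def[symmetric] S2_def[symmetric]
          by (simp add: indicator_def)
      qed
    qed
    have "morrey_local_int p h a r = (\<integral>\<^sup>+ y. ennreal (\<bar>\<alpha>\<bar> powr p) * indicator (ball a r \<inter> S1) y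
        + ennreal (\<bar>\<beta>\<bar> powr p) * indicator (ball a r \<inter> S2) y \<partial>lebesgue)"
      unfolding morrey_local_int_def using pt by simp
    also have "\<dots> = ennreal (\<bar>\<alpha>\<bar> powr p) * emeasure lebesgue (ball a r \<inter> S1)
        + ennreal (\<bar>\<beta>\<bar> powr p) * emeasure lebesgue (ball a r \<inter> S2)"
      by (simp add: nn_integral_add nn_integral_cmult_indicator)
    also have "\<dots> = ennreal (\<bar>\<alpha>\<bar> powr p * \<mu> a r S1 + \<bar>\<beta>\<bar> powr p * \<mu> a r S2)"
      unfolding \<mu>_def using lm[of S1 a r] lm[of S2 a r]
      by (simp add: emeasure_eq_measure2 ennreal_mult ennreal_plus)
    finally show ?thesis .
  qed
  have mu0: "\<mu> a r S \<ge> 0" for a r S unfolding \<mu>_def by simp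
  have muS: "\<mu> a r S \<le> w" if "S = S1 \<or> S = S2" for a r S
  proof -
    have "\<mu> a r S \<le> measure lebesgue S" unfolding \<mu>_def
      using that lm[OF that, of a r] unfolding S1_def S2_def by (intro measure_mono_fmeasurable) auto
    also have "measure lebesgue S = w" using that unfolding S1_def S2_def w_def by (auto simp: ball_measure ball_content)
    finally show ?thesis .
  qed
  have muB: "\<mu> a r S \<le> measure lebesgue (ball a r)" if "S = S1 \<or> S = S2" for a r S
    unfolding \<mu>_def using lm[OF that, of a r] by (intro measure_mono_fmeasurable) auto
  have loc: "morrey_local p q h a r = measure lebesgue (ball a r) powr (1/q - 1/p)
      * (\<bar>\<alpha>\<bar> powr p * \<mu> a r S1 + \<bar>\<beta>\<bar> powr p * \<mu> a r S2) powr (1/p)" for a r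
  proof -
    have "0 \<le> \<bar>\<alpha>\<bar> powr p * \<mu> a r S1 + \<bar>\<beta>\<bar> powr p * \<mu> a r S2" (is "0 \<le> ?X") using mu0 by simp
    hence "enn2real (ennreal ?X) = ?X" by simp
    then show ?thesis unfolding morrey_local_def int by (simp only:)
  qed
  have single: "(c powr p * u) powr (1/p) = c * u powr (1/p)" if "c \<ge> 0" "u \<ge> 0" for c u
    using that p0 by (simp add: powr_mult powr_powr)
  have upper: "morrey_local p q h a r \<le> M * w powr (1/q)" if r: "r > 0" for a r
  proof -
    define m where "m = measure lebesgue (ball a r)"
    have m0: "m > 0" unfolding m_def using r by (rule ball_measure_pos)
    have one: "m powr (1/q - 1/p) * \<mu> a r S powr (1/p) \<le> w powr (1/q)" if "S = S1 \<or> S = S2" for S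
      using scalK[OF p m0[unfolded m_def] w0 mu0 muB[OF that] muS[OF that]] unfolding m_def .
    consider "ball a r \<inter> S2 = {}" | "ball a r \<inter> S1 = {}" | "ball a r \<inter> S1 \<noteq> {}" "ball a r \<inter> S2 \<noteq> {}" by blast
    then show ?thesis
    proof cases
      case 1
      hence "\<mu> a r S2 = 0" unfolding \<mu>_def by simp
      hence "morrey_local p q h a r = \<bar>\<alpha>\<bar> * (m powr (1/q - 1/p) * \<mu> a r S1 powr (1/p))"
        unfolding loc m_def using single[of "\<bar>\<alpha>\<bar>" "\<mu> a r S1"] mu0 by simp
      also have "\<dots> \<le> \<bar>\<alpha>\<bar> * w powr (1/q)" using one[of S1] by (simp add: mult_left_mono)
      also have "\<dots> \<le> M * w powr (1/q)" unfolding M_def by (intro mult_right_mono) auto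
      finally show ?thesis .
    next
      case 2
      hence "\<mu> a r S1 = 0" unfolding \<mu>_def by simp
      hence "morrey_local p q h a r = \<bar>\<beta>\<bar> * (m powr (1/q - 1/p) * \<mu> a r S2 powr (1/p))"
        unfolding loc m_def using single[of "\<bar>\<beta>\<bar>" "\<mu> a r S2"] mu0 by simp
      also have "\<dots> \<le> \<bar>\<beta>\<bar> * w powr (1/q)" using one[of S2] by (simp add: mult_left_mono)
      also have "\<dots> \<le> M * w powr (1/q)" unfolding M_def by (intro mult_right_mono) auto
      finally show ?thesis .
    next
      case 3
      then obtain y1 y2 where y1: "y1 \<in> ball a r" "y1 \<in> S1" and y2: "y2 \<in> ball a r" "y2 \<in> S2" by blast
      have "norm z \<le> norm y1 + dist y1 a + dist a y2 + dist y2 z"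
      proof -
        have "norm z \<le> norm y1 + norm (z - y1)" by (rule norm_triangle_sub)
        moreover have "norm (z - y1) = dist y1 z" by (simp add: dist_norm norm_minus_commute)
        moreover have "dist y1 z \<le> dist y1 a + dist a z" by (rule dist_triangle)
        moreover have "dist a z \<le> dist a y2 + dist y2 z" by (rule dist_triangle)
        ultimately show ?thesis by linarith
      qed
      moreover have "norm y1 < 1" "dist y1 a < r" "dist a y2 < r" "dist y2 z < 1"
        using y1 y2 unfolding S1_def S2_def by (auto simp: dist_commute)
      ultimately have rbig: "r \<ge> k0 p q + 1" using z by linarith
      hence r1: "r \<ge> 1" using k by linarith
      have rd: "r ^ DIM('a) \<ge> k0 p q"
      proof -
        have "r ^ 1 \<le> r ^ DIM('a)" using r1 DIM_positive[where 'a='a]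
          by (intro power_increasing) auto
        hence "r \<le> r ^ DIM('a)" by simp
        then show ?thesis using rbig by linarith
      qed
      have mw: "m = w * r ^ DIM('a)" unfolding m_def w_def using r by (simp add: ball_measure ball_content)
      have "(\<bar>\<alpha>\<bar> powr p * \<mu> a r S1 + \<bar>\<beta>\<bar> powr p * \<mu> a r S2) powr (1/p)
          \<le> (M powr p * w + M powr p * w) powr (1/p)"
      proof (rule powr_mono2)
        have a1: "\<bar>\<alpha>\<bar> powr p \<le> M powr p" "\<bar>\<beta>\<bar> powr p \<le> M powr p" unfolding M_def using p0
          by (auto intro!: powr_mono2)
        have "\<bar>\<alpha>\<bar> powr p * \<mu> a r S1 \<le> M powr p * w"
          using mult_mono[OF a1(1) muS[of S1 a r]] mu0 by simp
        moreover have "\<bar>\<beta>\<bar> powr p * \<mu> a r S2 \<le> M powr p * w"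
          using mult_mono[OF a1(2) muS[of S2 a r]] mu0 by simp
        ultimately show "\<bar>\<alpha>\<bar> powr p * \<mu> a r S1 + \<bar>\<beta>\<bar> powr p * \<mu> a r S2 \<le> M powr p * w + M powr p * w"
          by (rule add_mono)
        show "0 \<le> \<bar>\<alpha>\<bar> powr p * \<mu> a r S1 + \<bar>\<beta>\<bar> powr p * \<mu> a r S2" using mu0 by simp
        show "0 \<le> 1/p" using p0 by simp
      qed
      also have "\<dots> = M * (2 powr (1/p) * w powr (1/p))"
      proof -
        have "M powr p * w + M powr p * w = M powr p * (2 * w)" by simp
        then show ?thesis using single[of M "2*w"] w0 unfolding M_def by (simp add: powr_mult)
      qed
      finally have 1: "(\<bar>\<alpha>\<bar> powr p * \<mu> a r S1 + \<bar>\<beta>\<bar> powr p * \<mu> a r S2) powr (1/p)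
          \<le> M * (2 powr (1/p) * w powr (1/p))" .
      have "morrey_local p q h a r \<le> m powr (1/q - 1/p) * (M * (2 powr (1/p) * w powr (1/p)))"
        unfolding loc m_def using 1 by (intro mult_left_mono) auto
      also have "\<dots> = M * w powr (1/q) * (2 powr (1/p) * (r ^ DIM('a)) powr (1/q - 1/p))"
        unfolding mw using w0 r by (simp add: powr_mult algebra_simps flip: powr_add)
      also have "\<dots> \<le> M * w powr (1/q) * 1"
        using scalK2[OF p rd] unfolding M_def by (intro mult_left_mono) auto
      finally show ?thesis by simp
    qed
  qed
  have at1: "morrey_local p q h 0 1 = \<bar>\<alpha>\<bar> * w powr (1/q)"
  proof -
    have e: "ball 0 1 \<inter> S2 = {}" using disj unfolding S1_def S2_def by blast
    have "\<mu> 0 1 S1 = w" "\<mu> 0 1 S2 = 0"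
      unfolding \<mu>_def S1_def w_def using e unfolding S1_def
      by (auto simp: ball_measure ball_content)
    moreover have "measure lebesgue (ball (0::'a) 1) = w" unfolding w_def by (simp add: ball_measure ball_content)
    ultimately show ?thesis unfolding loc using single[of "\<bar>\<alpha>\<bar>" w] w0
      by (simp add: mult.assoc[symmetric] mult.commute[of _ "\<bar>\<alpha>\<bar>"]) (simp add: mult.assoc flip: powr_add)
  qed
  have at2: "morrey_local p q h z 1 = \<bar>\<beta>\<bar> * w powr (1/q)"
  proof -
    have e: "ball z 1 \<inter> S1 = {}" using disj unfolding S1_def S2_def by blast
    have "\<mu> z 1 S2 = w" "\<mu> z 1 S1 = 0"
      unfolding \<mu>_def S2_def w_def using e unfolding S2_def
      by (auto simp: ball_measure ball_content)
    moreover have "measure lebesgue (ball z 1) = w" unfolding w_def by (simp add: ball_measure ball_content)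
    ultimately show ?thesis unfolding loc using single[of "\<bar>\<beta>\<bar>" w] w0
      by (simp add: mult.assoc[symmetric] mult.commute[of _ "\<bar>\<beta>\<bar>"]) (simp add: mult.assoc flip: powr_add)
  qed
  have fin: "morrey_local_int p h a r < \<infinity>" for a r unfolding int by simp
  have inm: "in_morrey p q h" unfolding in_morrey_def using hm fin upper by (auto intro!: bdd_aboveI)
  have "morrey_norm p q h = M * w powr (1/q)"
    unfolding morrey_norm_def
  proof (rule cSup_eq_maximum)
    show "M * w powr (1/q) \<in> {morrey_local p q h a r |a r. 0 < r}"
    proof (cases "\<bar>\<beta>\<bar> \<le> \<bar>\<alpha>\<bar>")
      case True
      then show ?thesis using at1 unfolding M_def by (auto intro!: exI[of _ 0] exI[of _ 1])
    next
      case False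
      then show ?thesis using at2 unfolding M_def by (auto intro!: exI[of _ z] exI[of _ 1])
    qed
  qed (use upper in auto)
  then show ?thesis using inm unfolding M_def w_def by simp
qed

lemma nj_bound:
  fixes f g :: "'a::euclidean_space \<Rightarrow> real"
  assumes p: "1 \<le> p" and f: "in_morrey p q f" and g: "in_morrey p q g"
    and a: "morrey_norm p q f \<noteq> 0" and b: "morrey_norm p q g \<noteq> 0"
  shows "((morrey_norm p q (\<lambda>t. f t + g t))\<^sup>2 + (morrey_norm p q (\<lambda>t. f t - g t))\<^sup>2)
       / (2 * ((morrey_norm p q f)\<^sup>2 + (morrey_norm p q g)\<^sup>2)) \<le> 2"
proof -
  define A where "A = morrey_norm p q f"
  define B where "B = morrey_norm p q g"
  define X where "X = morrey_norm p q (\<lambda>t. f t + g t)"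
  define Y where "Y = morrey_norm p q (\<lambda>t. f t - g t)"
  have A0: "A > 0" using a norm_nonneg[OF f] unfolding A_def by linarith
  have B0: "B > 0" using b norm_nonneg[OF g] unfolding B_def by linarith
  have X: "0 \<le> X" "X \<le> A + B" using in_morrey_add[OF p f g] norm_nonneg unfolding X_def A_def B_def by auto
  have Y: "0 \<le> Y" "Y \<le> A + B" using diff_morrey[OF p f g] norm_nonneg unfolding Y_def A_def B_def by auto
  have "X\<^sup>2 \<le> (A+B)\<^sup>2" "Y\<^sup>2 \<le> (A+B)\<^sup>2" using X Y by (auto intro!: power_mono)
  moreover have "2 * (A+B)\<^sup>2 \<le> 4 * (A\<^sup>2 + B\<^sup>2)"
  proof -
    have "0 \<le> (A-B)*(A-B)" by simp
    then show ?thesis unfolding power2_eq_square by (simp add: algebra_simps)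
  qed
  ultimately have "X\<^sup>2 + Y\<^sup>2 \<le> 2 * (2 * (A\<^sup>2 + B\<^sup>2))" by linarith
  moreover have "2 * (A\<^sup>2 + B\<^sup>2) > 0" using A0 by (simp add: add_pos_nonneg)
  ultimately show ?thesis unfolding A_def[symmetric] B_def[symmetric] X_def[symmetric] Y_def[symmetric]
    by (simp add: divide_le_eq)
qed

lemma j_bound:
  fixes f g :: "'a::euclidean_space \<Rightarrow> real"
  assumes p: "1 \<le> p" and f: "in_morrey p q f" and g: "in_morrey p q g"
    and a: "morrey_norm p q f = 1" and b: "morrey_norm p q g = 1"
  shows "min (morrey_norm p q (\<lambda>t. f t + g t)) (morrey_norm p q (\<lambda>t. f t - g t)) \<le> 2"
  using in_morrey_add[OF p f g] a b by (simp add: min.coboundedI1)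

theorem theorem1:
  fixes p q :: real
  assumes "1 \<le> p" and "p < q"
  shows "morrey_C_NJ p q TYPE('a::euclidean_space \<Rightarrow> real) = 2
       \<and> morrey_C_J p q TYPE('a \<Rightarrow> real) = 2
       \<and> morrey_C_DW p q TYPE('a \<Rightarrow> real) = 4"
proof -
  note p = assms
  obtain e :: 'a where e: "e \<in> Basis" using nonempty_Basis by blast
  define z :: 'a where "z = (2 * k0 p q + 4) *\<^sub>R e"
  have k: "k0 p q > 0" unfolding k0_def by simp
  have nz: "norm z \<ge> 2 * k0 p q + 4" unfolding z_def using e k by simp
  define c where "c = unit_ball_vol DIM('a) powr (1/q)"
  have c0: "c > 0" unfolding c_def using unit_ball_vol_pos[of "real DIM('a)"] powr_gt_zero by (metis less_irrefl of_nat_0_le_iff)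
  define H :: "real \<Rightarrow> real \<Rightarrow> 'a \<Rightarrow> real" where
    "H \<alpha> \<beta> = (\<lambda>t. \<alpha> * indicator (ball 0 1) t + \<beta> * indicator (ball z 1) t)" for \<alpha> \<beta>
  have TB: "in_morrey p q (H \<alpha> \<beta>) \<and> morrey_norm p q (H \<alpha> \<beta>) = max \<bar>\<alpha>\<bar> \<bar>\<beta>\<bar> * c" for \<alpha> \<beta>
    using two_ball[OF p nz, of \<alpha> \<beta>] unfolding H_def c_def by simp
  define f1 where "f1 = H (1/c) (1/c)"
  define g1 where "g1 = H (1/c) (-1/c)"
  have f1: "in_morrey p q f1" "morrey_norm p q f1 = 1" unfolding f1_def using TB c0 by auto
  have g1: "in_morrey p q g1" "morrey_norm p q g1 = 1" unfolding g1_def using TB c0 by auto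
  have fpg: "(\<lambda>t. f1 t + g1 t) = H (2/c) 0" unfolding f1_def g1_def H_def by (auto simp: algebra_simps)
  have fmg: "(\<lambda>t. f1 t - g1 t) = H 0 (2/c)" unfolding f1_def g1_def H_def by (auto simp: algebra_simps)
  have n2: "morrey_norm p q (\<lambda>t. f1 t + g1 t) = 2" "morrey_norm p q (\<lambda>t. f1 t - g1 t) = 2"
    unfolding fpg fmg using TB c0 by auto
  have NJ: "morrey_C_NJ p q TYPE('a \<Rightarrow> real) = 2"
    unfolding morrey_C_NJ_def
  proof (rule cSup_eq_maximum)
    show "2 \<in> {((morrey_norm p q (\<lambda>t. f t + g t))\<^sup>2 + (morrey_norm p q (\<lambda>t. f t - g t))\<^sup>2)
       / (2 * ((morrey_norm p q f)\<^sup>2 + (morrey_norm p q g)\<^sup>2))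
     | f g :: 'a \<Rightarrow> real. in_morrey p q f \<and> in_morrey p q g
         \<and> morrey_norm p q f \<noteq> 0 \<and> morrey_norm p q g \<noteq> 0}"
      unfolding mem_Collect_eq
      by (rule exI[of _ f1], rule exI[of _ g1]) (simp add: f1 g1 n2)
  next
    fix x assume "x \<in> {((morrey_norm p q (\<lambda>t. f t + g t))\<^sup>2 + (morrey_norm p q (\<lambda>t. f t - g t))\<^sup>2)
       / (2 * ((morrey_norm p q f)\<^sup>2 + (morrey_norm p q g)\<^sup>2))
     | f g :: 'a \<Rightarrow> real. in_morrey p q f \<and> in_morrey p q g
         \<and> morrey_norm p q f \<noteq> 0 \<and> morrey_norm p q g \<noteq> 0}"
    then show "x \<le> 2" using nj_bound[OF p(1)] by auto
  qed
  have J: "morrey_C_J p q TYPE('a \<Rightarrow> real) = 2"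
    unfolding morrey_C_J_def
  proof (rule cSup_eq_maximum)
    show "2 \<in> {min (morrey_norm p q (\<lambda>t. f t + g t)) (morrey_norm p q (\<lambda>t. f t - g t))
     | f g :: 'a \<Rightarrow> real. in_morrey p q f \<and> in_morrey p q g
         \<and> morrey_norm p q f = 1 \<and> morrey_norm p q g = 1}"
      unfolding mem_Collect_eq
      by (rule exI[of _ f1], rule exI[of _ g1]) (simp add: f1 g1 n2)
  next
    fix x assume "x \<in> {min (morrey_norm p q (\<lambda>t. f t + g t)) (morrey_norm p q (\<lambda>t. f t - g t))
     | f g :: 'a \<Rightarrow> real. in_morrey p q f \<and> in_morrey p q g
         \<and> morrey_norm p q f = 1 \<and> morrey_norm p q g = 1}"
    then show "x \<le> 2" using j_bound[OF p(1)] by auto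
  qed
  define DWS where "DWS = {(morrey_norm p q f + morrey_norm p q g) / morrey_norm p q (\<lambda>t. f t - g t)
       * morrey_norm p q (\<lambda>t. f t / morrey_norm p q f - g t / morrey_norm p q g)
     | f g :: 'a \<Rightarrow> real. in_morrey p q f \<and> in_morrey p q g
         \<and> morrey_norm p q f \<noteq> 0 \<and> morrey_norm p q g \<noteq> 0
         \<and> morrey_norm p q (\<lambda>t. f t - g t) \<noteq> 0}"
  have inDW: "2 * (1 + s) \<in> DWS" if s: "0 < s" "s < 1" for s
  proof -
    define f where "f = H 1 (2 * s - 1)"
    define g where "g = H s s"
    have f: "in_morrey p q f" "morrey_norm p q f = c"
      unfolding f_def using TB[of 1 "2 * s - 1"] s by (auto simp: max_def)
    have g: "in_morrey p q g" "morrey_norm p q g = s * c"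
      unfolding g_def using TB[of s s] s by auto
    have fg: "(\<lambda>t. f t - g t) = H (1 - s) (s - 1)" unfolding f_def g_def H_def by (auto simp: algebra_simps)
    have nfg: "morrey_norm p q (\<lambda>t. f t - g t) = (1 - s) * c" unfolding fg using TB[of "1-s" "s-1"] s by (auto simp: max_def)
    have fg2: "(\<lambda>t. f t / c - g t / (s * c)) = H 0 ((2 * s - 2)/c)"
      unfolding f_def g_def H_def using s c0 by (auto simp: field_simps indicator_def)
    have nfg2: "morrey_norm p q (\<lambda>t. f t / c - g t / (s * c)) = 2 * (1 - s)"
    proof -
      have "\<bar>(2 * s - 2)/c\<bar> = (2 - 2 * s)/c" using s c0 by (simp add: abs_div)
      then have "max \<bar>0\<bar> \<bar>(2 * s - 2)/c\<bar> * c = 2 * (1 - s)" using s c0 by simp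
      then show ?thesis unfolding fg2 using TB[of 0 "(2 * s - 2)/c"] by simp
    qed
    have val: "(c + s * c) / ((1 - s) * c) * (2 * (1 - s)) = 2 * (1 + s)"
      using s c0 by (simp add: field_simps)
    show ?thesis unfolding DWS_def mem_Collect_eq
      by (rule exI[of _ f], rule exI[of _ g]) (use f g nfg nfg2 val s c0 in simp)
  qed
  have DW: "morrey_C_DW p q TYPE('a \<Rightarrow> real) = 4"
    unfolding morrey_C_DW_def DWS_def[symmetric]
  proof (rule cSup_eq_non_empty)
    show "DWS \<noteq> {}" using inDW[of "1/2"] by auto
  next
    fix x assume "x \<in> DWS"
    then show "x \<le> 4" unfolding DWS_def using dw_bound[OF p(1)] by auto
  next
    fix y assume y: "\<And>x. x \<in> DWS \<Longrightarrow> x \<le> y"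
    show "4 \<le> y"
    proof (rule ccontr)
      assume "\<not> 4 \<le> y"
      hence y4: "y < 4" by simp
      have "2 * (1 + 1/2) \<le> y" using y inDW[of "1/2"] by simp
      hence y3: "y \<ge> 3" by simp
      have "2 * (1 + y/4) \<le> y" using y inDW[of "y/4"] y3 y4 by simp
      then show False using y4 by simp
    qed
  qed
  show ?thesis using NJ J DW by blast
qed

end
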